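(* Let $X$ be a locally compact Hausdorff topological space with a basis of compact open sets, $G$ a discrete group, $\phi=(\phi_g,X_g,X)_{g\in G}$ a partial action of $G$ on $X$ (with $X_g$ open), and $K$ a field. Then $V\mapsto C_K(V)\rtimes_{\phi|_V}G$ is a bijection between the open invariant subsets of $X$ and the graded ideals of $C_K(X)\rtimes_\phi G$.
   Context: A partial action of $G$ (identity $\varepsilon$) on a topological space $X$ is $(\phi_g,X_g,X)_{g\in G}$ with $X_g$ open, homeomorphisms $\phi_g:X_{g^{-1}}\to X_g$, and (i) $X_\varepsilon=X$, $\phi_\varepsilon=\operatorname{id}$; (ii) $\phi_g(X_{g^{-1}}\cap X_h)=X_g\cap X_{gh}$; (iii) $\phi_g\phi_h(x)=\phi_{gh}(x)$ for $x\in X_{h^{-1}}\cap X_{h^{-1}g^{-1}}$. $V\subseteq X$ is invariant if $\phi_{g^{-1}}(X_g\cap V)\subseteq X_{g^{-1}}\cap V$ for all $g$; then $\phi|_V=(\phi_g,V\cap X_g,V)$. $C_K(Y)$ is the algebra of compactly supported locally constant functions $Y\to K$; $C_K(W)$ for open $W$ is the ideal of functions vanishing off $W$; $\phi_g(f)=f\circ\phi_{g^{-1}}$. The partial skew group ring $C_K(X)\rtimes_\phi G$ consists of finite sums $\sum a_g\delta_g$, $a_g\in C_K(X_g)$, with product $(a_g\delta_g)(b_h\delta_h)=\phi_g(\phi_{g^{-1}}(a_g)b_h)\delta_{gh}$, graded by $\deg(a_g\delta_g)=g$; $C_K(V)\rtimes_{\phi|_V}G=\{\sum a_g\delta_g: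 a_g\in C_K(V\cap X_g)\}$ is viewed as a subset of it. An ideal is graded if it is the direct sum of its intersections with the homogeneous components. *)

theory Defs
  imports "HOL-Analysis.Analysis"
begin

text \<open>The group G is written additively via the (non-commutative) class group_add:
  identity 0, product g + h, inverse - g.  The space X is the whole type 'x.\<close>

definition locally_compact_Hausdorff_space :: "'x::t2_space itself \<Rightarrow> bool" where
  "locally_compact_Hausdorff_space _ \<longleftrightarrow>
     (\<forall>x::'x. \<exists>U C. open U \<and> compact C \<and> x \<in> U \<and> U \<subseteq> C)"

definition has_compact_open_basis :: "'x::topological_space itself \<Rightarrow> bool" where
  "has_compact_open_basis _ \<longleftrightarrow>
     (\<forall>(U::'x set) x. open U \<and> x \<in> U \<longrightarrow> (\<exists>W. open W \<and> compact W \<and> x \<in> W \<and> W \<subseteq> U))"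

definition partial_action ::
    "('g::group_add \<Rightarrow> 'x::topological_space \<Rightarrow> 'x) \<Rightarrow> ('g \<Rightarrow> 'x set) \<Rightarrow> bool" where
  "partial_action phi Xg \<longleftrightarrow>
     (\<forall>g. open (Xg g)) \<and>
     (\<forall>g. \<exists>psi. homeomorphism (Xg (- g)) (Xg g) (phi g) psi) \<and>
     Xg 0 = UNIV \<and> (\<forall>x. phi 0 x = x) \<and>
     (\<forall>g h. phi g ` (Xg (- g) \<inter> Xg h) = Xg g \<inter> Xg (g + h)) \<and>
     (\<forall>g h x. x \<in> Xg (- h) \<inter> Xg (- h + - g) \<longrightarrow> phi g (phi h x) = phi (g + h) x)"

definition invariant_set ::
    "('g::group_add \<Rightarrow> 'x \<Rightarrow> 'x) \<Rightarrow> ('g \<Rightarrow> 'x set) \<Rightarrow> 'x set \<Rightarrow> bool" where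
  "invariant_set phi Xg V \<longleftrightarrow> (\<forall>g. phi (- g) ` (Xg g \<inter> V) \<subseteq> Xg (- g) \<inter> V)"

definition CK :: "'x::topological_space set \<Rightarrow> ('x \<Rightarrow> 'k::field) set" where
  "CK W = {f. (\<forall>x. \<exists>U. open U \<and> x \<in> U \<and> (\<forall>y\<in>U. f y = f x)) \<and>
              (\<exists>C. compact C \<and> (\<forall>x. x \<notin> C \<longrightarrow> f x = 0)) \<and>
              (\<forall>x. x \<notin> W \<longrightarrow> f x = 0)}"

definition pact ::
    "('g::group_add \<Rightarrow> 'x \<Rightarrow> 'x) \<Rightarrow> ('g \<Rightarrow> 'x set) \<Rightarrow> 'g \<Rightarrow> ('x \<Rightarrow> 'k::field) \<Rightarrow> ('x \<Rightarrow> 'k)" where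
  "pact phi Xg g f = (\<lambda>x. if x \<in> Xg g then f (phi (- g) x) else 0)"

text \<open>Elements \<Sum> a_g \<delta>_g of the partial skew group ring, represented as the function g \<mapsto> a_g.\<close>
definition fsupp :: "('g \<Rightarrow> 'x \<Rightarrow> 'k::zero) \<Rightarrow> 'g set" where
  "fsupp a = {g. a g \<noteq> (\<lambda>_. 0)}"

definition skew_ring ::
    "('g::group_add \<Rightarrow> 'x::topological_space set) \<Rightarrow> 'x set \<Rightarrow> ('g \<Rightarrow> 'x \<Rightarrow> 'k::field) set" where
  "skew_ring Xg V = {a. finite (fsupp a) \<and> (\<forall>g. a g \<in> CK (V \<inter> Xg g))}"

definition skew_add :: "('g \<Rightarrow> 'x \<Rightarrow> 'k::field) \<Rightarrow> ('g \<Rightarrow> 'x \<Rightarrow> 'k) \<Rightarrow> ('g \<Rightarrow> 'x \<Rightarrow> 'k)" where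
  "skew_add a b = (\<lambda>g x. a g x + b g x)"

definition skew_neg :: "('g \<Rightarrow> 'x \<Rightarrow> 'k::field) \<Rightarrow> ('g \<Rightarrow> 'x \<Rightarrow> 'k)" where
  "skew_neg a = (\<lambda>g x. - a g x)"

text \<open>(a_g \<delta>_g)(b_h \<delta>_h) = phi_g(phi_{g^{-1}}(a_g) b_h) \<delta>_{gh}, extended bilinearly.\<close>
definition skew_mult ::
    "('g::group_add \<Rightarrow> 'x \<Rightarrow> 'x) \<Rightarrow> ('g \<Rightarrow> 'x set) \<Rightarrow>
     ('g \<Rightarrow> 'x \<Rightarrow> 'k::field) \<Rightarrow> ('g \<Rightarrow> 'x \<Rightarrow> 'k) \<Rightarrow> ('g \<Rightarrow> 'x \<Rightarrow> 'k)" where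
  "skew_mult phi Xg a b = (\<lambda>k x. \<Sum>g\<in>fsupp a.
      pact phi Xg g (\<lambda>y. pact phi Xg (- g) (a g) y * b (- g + k) y) x)"

definition skew_ideal ::
    "('g::group_add \<Rightarrow> 'x::topological_space \<Rightarrow> 'x) \<Rightarrow> ('g \<Rightarrow> 'x set) \<Rightarrow> ('g \<Rightarrow> 'x \<Rightarrow> 'k::field) set \<Rightarrow> bool" where
  "skew_ideal phi Xg I \<longleftrightarrow>
     I \<subseteq> skew_ring Xg UNIV \<and> (\<lambda>g x. 0) \<in> I \<and>
     (\<forall>a\<in>I. \<forall>b\<in>I. skew_add a b \<in> I) \<and> (\<forall>a\<in>I. skew_neg a \<in> I) \<and>
     (\<forall>a\<in>I. \<forall>r\<in>skew_ring Xg UNIV. skew_mult phi Xg r a \<in> I \<and> skew_mult phi Xg a r \<in> I)"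

definition hom_comp :: "'g \<Rightarrow> ('g \<Rightarrow> 'x \<Rightarrow> 'k::zero) \<Rightarrow> ('g \<Rightarrow> 'x \<Rightarrow> 'k)" where
  "hom_comp g a = (\<lambda>h. if h = g then a g else (\<lambda>_. 0))"

text \<open>Graded: I is the direct sum of its intersections with the homogeneous components,
  i.e. every homogeneous component of an element of I lies in I.\<close>
definition graded_ideal ::
    "('g::group_add \<Rightarrow> 'x::topological_space \<Rightarrow> 'x) \<Rightarrow> ('g \<Rightarrow> 'x set) \<Rightarrow> ('g \<Rightarrow> 'x \<Rightarrow> 'k::field) set \<Rightarrow> bool" where
  "graded_ideal phi Xg I \<longleftrightarrow> skew_ideal phi Xg I \<and> (\<forall>a\<in>I. \<forall>g. hom_comp g a \<in> I)"

end

theory Submission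
  imports Defs
begin

definition lcst :: "('x::topological_space \<Rightarrow> 'k) \<Rightarrow> bool" where
  "lcst f \<longleftrightarrow> (\<forall>x. \<exists>U. open U \<and> x \<in> U \<and> (\<forall>y\<in>U. f y = f x))"
lemma lcst_open_P: assumes l: "lcst f" shows "open {x. P (f x)}"
proof (rule Topological_Spaces.openI)
  fix x assume x: "x \<in> {x. P (f x)}"
  obtain U where U: "open U" "x \<in> U" "\<forall>y\<in>U. f y = f x" using l unfolding lcst_def by blast
  have "U \<subseteq> {x. P (f x)}"
  proof
    fix y assume "y \<in> U" then have "f y = f x" using U(3) by blast
    then show "y \<in> {x. P (f x)}" using x by simp
  qed
  then show "\<exists>T. open T \<and> x \<in> T \<and> T \<subseteq> {x. P (f x)}" using U by blast
qed
lemma lcst_comb: assumes "lcst f" "lcst g" shows "lcst (\<lambda>x. h (f x) (g x))"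
  unfolding lcst_def
proof
  fix x
  obtain U where U: "open U" "x \<in> U" "\<forall>y\<in>U. f y = f x" using assms(1) unfolding lcst_def by blast
  obtain U' where U': "open U'" "x \<in> U'" "\<forall>y\<in>U'. g y = g x" using assms(2) unfolding lcst_def by blast
  have "\<forall>y\<in>U \<inter> U'. h (f y) (g y) = h (f x) (g x)"
  proof
    fix y assume "y \<in> U \<inter> U'" then have "f y = f x" "g y = g x" using U(3) U'(3) by blast+
    then show "h (f y) (g y) = h (f x) (g x)" by simp
  qed
  moreover have "open (U \<inter> U')" "x \<in> U \<inter> U'" using U U' by auto
  ultimately show "\<exists>U. open U \<and> x \<in> U \<and> (\<forall>y\<in>U. h (f y) (g y) = h (f x) (g x))" by blast
qed
lemma lcst_const: "lcst (\<lambda>x. c)" unfolding lcst_def by auto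

definition ind :: "'x set \<Rightarrow> 'x \<Rightarrow> 'k::field" where
  "ind U = (\<lambda>x. if x \<in> U then 1 else 0)"

lemma CK_iff: "f \<in> CK W \<longleftrightarrow> lcst f \<and> (\<exists>C. compact C \<and> (\<forall>x. x \<notin> C \<longrightarrow> f x = 0)) \<and> (\<forall>x. x \<notin> W \<longrightarrow> f x = 0)"
  unfolding CK_def lcst_def by simp

lemma CK_mono: "f \<in> CK A \<Longrightarrow> A \<subseteq> B \<Longrightarrow> f \<in> CK B"
  unfolding CK_iff by blast

lemma CK_zero: "(\<lambda>_. 0) \<in> CK W"
  unfolding CK_iff using lcst_const by auto

lemma lcst_open_eq: "lcst f \<Longrightarrow> open {x. f x = c}"
  using lcst_open_P[of f "\<lambda>v. v = c"] by simp

lemma lcst_open_neq: "lcst f \<Longrightarrow> open {x. f x \<noteq> c}"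
  using lcst_open_P[of f "\<lambda>v. v \<noteq> c"] by simp

lemma lcst_closed_eq: "lcst f \<Longrightarrow> closed {x. f x = c}"
proof -
  assume "lcst f"
  then have "open {x. f x \<noteq> c}" by (rule lcst_open_neq)
  moreover have "- {x. f x = c} = {x. f x \<noteq> c}" by blast
  ultimately show ?thesis unfolding closed_def by simp
qed

lemma lcst_closed_neq: "lcst f \<Longrightarrow> closed {x. f x \<noteq> c}"
proof -
  assume "lcst f"
  then have "open {x. f x = c}" by (rule lcst_open_eq)
  moreover have "- {x. f x \<noteq> c} = {x. f x = c}" by blast
  ultimately show ?thesis unfolding closed_def by simp
qed

lemma CK_supp_compact:
  assumes "f \<in> CK W" shows "compact {x. f x \<noteq> 0}"
proof -
  from assms obtain C where C: "compact C" "\<forall>x. x \<notin> C \<longrightarrow> f x = 0" and l: "lcst f"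
    unfolding CK_iff by blast
  have eq: "{x. f x \<noteq> 0} = C \<inter> {x. f x \<noteq> 0}" using C by auto
  have "closed {x. f x \<noteq> 0}" using l by (rule lcst_closed_neq)
  then have "compact (C \<inter> {x. f x \<noteq> 0})" using C(1) by (rule compact_Int_closed[rotated])
  then show ?thesis using eq by simp
qed

lemma CK_supp_open: "f \<in> CK W \<Longrightarrow> open {x. f x \<noteq> 0}"
  unfolding CK_iff by (intro lcst_open_neq) (elim conjE)

lemma CK_supp_sub: "f \<in> CK W \<Longrightarrow> {x. f x \<noteq> 0} \<subseteq> W"
  unfolding CK_iff by blast

lemma CK_add: "f \<in> CK W \<Longrightarrow> g \<in> CK W \<Longrightarrow> (\<lambda>x. f x + g x) \<in> CK W"
proof -
  assume f: "f \<in> CK W" and g: "g \<in> CK W"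
  from f obtain C where C: "compact C" "\<forall>x. x \<notin> C \<longrightarrow> f x = 0" and lf: "lcst f"
    unfolding CK_iff by blast
  from g obtain D where D: "compact D" "\<forall>x. x \<notin> D \<longrightarrow> g x = 0" and lg: "lcst g"
    unfolding CK_iff by blast
  have "lcst (\<lambda>x. f x + g x)" using lcst_comb[OF lf lg] .
  moreover have "compact (C \<union> D)" using C D by auto
  moreover have "\<forall>x. x \<notin> C \<union> D \<longrightarrow> f x + g x = 0" using C D by auto
  moreover have "\<forall>x. x \<notin> W \<longrightarrow> f x + g x = 0" using f g unfolding CK_iff by auto
  ultimately show ?thesis unfolding CK_iff by blast
qed

lemma CK_neg: "f \<in> CK W \<Longrightarrow> (\<lambda>x. - f x) \<in> CK W"
proof -
  assume f: "f \<in> CK W"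
  have "lcst (\<lambda>x. - f x)" using lcst_comb[of f f "\<lambda>a b. - a"] f unfolding CK_iff by blast
  then show ?thesis using f unfolding CK_iff by auto
qed

lemma CK_mult: "f \<in> CK A \<Longrightarrow> g \<in> CK B \<Longrightarrow> (\<lambda>x. f x * g x) \<in> CK (A \<inter> B)"
proof -
  assume f: "f \<in> CK A" and g: "g \<in> CK B"
  from f obtain C where C: "compact C" "\<forall>x. x \<notin> C \<longrightarrow> f x = 0" and lf: "lcst f"
    unfolding CK_iff by blast
  from g have lg: "lcst g" unfolding CK_iff by blast
  have "lcst (\<lambda>x. f x * g x)" using lcst_comb[OF lf lg] .
  moreover have "\<forall>x. x \<notin> C \<longrightarrow> f x * g x = 0" using C by auto
  moreover have "\<forall>x. x \<notin> A \<inter> B \<longrightarrow> f x * g x = 0" using f g unfolding CK_iff by auto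
  ultimately show ?thesis using C(1) unfolding CK_iff by blast
qed

lemma CK_sum: "finite F \<Longrightarrow> (\<And>g. g \<in> F \<Longrightarrow> f g \<in> CK W) \<Longrightarrow> (\<lambda>x. \<Sum>g\<in>F. f g x) \<in> CK W"
proof (induction F rule: finite_induct)
  case empty then show ?case using CK_zero by simp
next
  case (insert a F)
  then show ?case using CK_add[of "f a" W "\<lambda>x. \<Sum>g\<in>F. f g x"] by simp
qed

lemma ind_CK:
  fixes U :: "'x::t2_space set"
  assumes "compact U" "open U" "U \<subseteq> W" shows "(ind U :: 'x \<Rightarrow> 'k::field) \<in> CK W"
proof -
  have "closed U" using assms compact_imp_closed by blast
  have "lcst (ind U :: 'x \<Rightarrow> 'k)"
    unfolding lcst_def
  proof
    fix x show "\<exists>V. open V \<and> x \<in> V \<and> (\<forall>y\<in>V. (ind U :: 'x \<Rightarrow> 'k) y = ind U x)"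
    proof (cases "x \<in> U")
      case True then show ?thesis using assms by (intro exI[of _ U]) (auto simp: ind_def)
    next
      case False then show ?thesis using \<open>closed U\<close>
        by (intro exI[of _ "- U"]) (auto simp: ind_def closed_def)
    qed
  qed
  then show ?thesis unfolding CK_iff using assms by (auto simp: ind_def intro!: exI[of _ U])
qed

lemma CK_scale: "f \<in> CK A \<Longrightarrow> (\<lambda>x. f x * c) \<in> CK A"
proof -
  assume f: "f \<in> CK A"
  have "lcst (\<lambda>x. f x * c)" using lcst_comb[of f f "\<lambda>a b. a * c"] f unfolding CK_iff by blast
  then show ?thesis using f unfolding CK_iff by auto
qed

lemma pact_zero: "pact phi Xg g (\<lambda>_. 0) = (\<lambda>_. 0)"
  by (auto simp: pact_def)

definition Vof :: "('g::zero \<Rightarrow> 'x \<Rightarrow> 'k::zero) set \<Rightarrow> 'x set" where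
  "Vof I = {x. \<exists>a\<in>I. a 0 x \<noteq> 0}"

context
  fixes phi :: "'g::group_add \<Rightarrow> 'x::t2_space \<Rightarrow> 'x" and Xg :: "'g \<Rightarrow> 'x set"
  assumes PA: "partial_action phi Xg"
begin

lemma Xg_open: "open (Xg g)"
  using PA unfolding partial_action_def by blast

lemma Xg0: "Xg 0 = UNIV"
  using PA unfolding partial_action_def by blast

lemma phi0: "phi 0 x = x"
  using PA unfolding partial_action_def by blast

lemma phi_homeo: "\<exists>psi. homeomorphism (Xg (- g)) (Xg g) (phi g) psi"
  using PA unfolding partial_action_def by blast

lemma phi_cont: "continuous_on (Xg (- g)) (phi g)"
  using phi_homeo[of g] unfolding homeomorphism_def by blast

lemma phi_maps: "x \<in> Xg (- g) \<Longrightarrow> phi g x \<in> Xg g"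
  using phi_homeo[of g] unfolding homeomorphism_def by blast

lemma phi_cont': "continuous_on (Xg g) (phi (- g))"
  using phi_cont[of "- g"] by simp

lemma phi_maps': "x \<in> Xg g \<Longrightarrow> phi (- g) x \<in> Xg (- g)"
  using phi_maps[of x "- g"] by simp

lemma phi_img: "phi g ` (Xg (- g) \<inter> Xg h) = Xg g \<inter> Xg (g + h)"
  using PA unfolding partial_action_def by blast

lemma phi_comp: "x \<in> Xg (- h) \<inter> Xg (- h + - g) \<Longrightarrow> phi g (phi h x) = phi (g + h) x"
  using PA unfolding partial_action_def by blast

lemma phi_inv1: "x \<in> Xg g \<Longrightarrow> phi g (phi (- g) x) = x"
proof -
  assume x: "x \<in> Xg g"
  have "x \<in> Xg (- (- g)) \<inter> Xg (- (- g) + - g)" using x by (simp add: Xg0)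
  then have "phi g (phi (- g) x) = phi (g + - g) x" by (rule phi_comp)
  then show ?thesis by (simp add: phi0)
qed

lemma phi_inv2: "x \<in> Xg (- g) \<Longrightarrow> phi (- g) (phi g x) = x"
proof -
  assume x: "x \<in> Xg (- g)"
  have "x \<in> Xg (- g) \<inter> Xg (- g + - (- g))" using x by (simp add: Xg0)
  then have "phi (- g) (phi g x) = phi (- g + g) x" by (rule phi_comp)
  then show ?thesis by (simp add: phi0)
qed

lemma pact_0: "pact phi Xg 0 F = F"
  by (auto simp: pact_def Xg0 phi0)

lemma pact_CK:
  assumes F: "F \<in> CK S" and S: "S \<subseteq> Xg (- g)"
  shows "pact phi Xg g F \<in> CK (phi g ` S)"
proof -
  define D where "D = {y. F y \<noteq> 0}"
  have cD: "compact D" unfolding D_def using F by (rule CK_supp_compact)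
  have DS: "D \<subseteq> S" unfolding D_def using CK_supp_sub[OF F] .
  have cont: "continuous_on D (phi g)" by (rule continuous_on_subset[OF phi_cont]) (use DS S in blast)
  define K where "K = phi g ` D"
  have cK: "compact K" unfolding K_def using cont cD by (rule compact_continuous_image)
  have clK: "closed K" using cK by (rule compact_imp_closed)
  have KX: "K \<subseteq> Xg g" unfolding K_def using DS S phi_maps by blast
  have van: "pact phi Xg g F x = 0" if "x \<notin> K" for x
  proof (rule ccontr)
    assume ne: "pact phi Xg g F x \<noteq> 0"
    then have xX: "x \<in> Xg g" and Fne: "F (phi (- g) x) \<noteq> 0" unfolding pact_def by (auto split: if_splits)
    have "phi (- g) x \<in> D" unfolding D_def using Fne by simp
    moreover have "x = phi g (phi (- g) x)" using phi_inv1[OF xX] by simp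
    ultimately have "x \<in> K" unfolding K_def by blast
    then show False using that by blast
  qed
  have lc: "lcst F" using F unfolding CK_iff by blast
  have "lcst (pact phi Xg g F)"
    unfolding lcst_def
  proof
    fix x
    show "\<exists>U. open U \<and> x \<in> U \<and> (\<forall>y\<in>U. pact phi Xg g F y = pact phi Xg g F x)"
    proof (cases "x \<in> Xg g")
      case True
      obtain U0 where U0: "open U0" "phi (- g) x \<in> U0" "\<forall>y\<in>U0. F y = F (phi (- g) x)"
        using lc unfolding lcst_def by blast
      define U where "U = phi (- g) -` U0 \<inter> Xg g"
      have oU: "open U" unfolding U_def using phi_cont'[of g] Xg_open[of g] U0(1)
        by (simp add: continuous_on_open_vimage)
      have "\<forall>y\<in>U. pact phi Xg g F y = pact phi Xg g F x"
      proof
        fix y assume y: "y \<in> U"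
        then have "F (phi (- g) y) = F (phi (- g) x)" unfolding U_def using U0(3) by blast
        then show "pact phi Xg g F y = pact phi Xg g F x" using y True unfolding U_def pact_def by simp
      qed
      moreover have "x \<in> U" unfolding U_def using True U0(2) by simp
      ultimately show ?thesis using oU by blast
    next
      case False
      have "open (- K)" using clK by (simp add: open_Compl)
      moreover have "x \<in> - K" using False KX by blast
      moreover have "\<forall>y\<in>- K. pact phi Xg g F y = pact phi Xg g F x"
        using van False by (simp add: pact_def)
      ultimately show ?thesis by blast
    qed
  qed
  moreover have "\<forall>x. x \<notin> phi g ` S \<longrightarrow> pact phi Xg g F x = 0"
    using van DS unfolding K_def by blast
  ultimately show ?thesis unfolding CK_iff using cK van by blast
qed

lemma inv_UNIV: "invariant_set phi Xg UNIV"
  unfolding invariant_set_def using phi_maps' by blast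

lemma inv_Int: "invariant_set phi Xg A \<Longrightarrow> invariant_set phi Xg B \<Longrightarrow> invariant_set phi Xg (A \<inter> B)"
  unfolding invariant_set_def by blast

lemma pact_key:
  assumes V: "invariant_set phi Xg V" and F: "F \<in> CK (V \<inter> Xg (- g) \<inter> Xg (- g + k))"
  shows "pact phi Xg g F \<in> CK (V \<inter> Xg g \<inter> Xg k)"
proof -
  have "pact phi Xg g F \<in> CK (phi g ` (V \<inter> Xg (- g) \<inter> Xg (- g + k)))"
    using F by (rule pact_CK) blast
  moreover have "phi g ` (V \<inter> Xg (- g) \<inter> Xg (- g + k)) \<subseteq> V \<inter> Xg g \<inter> Xg k"
  proof
    fix y assume "y \<in> phi g ` (V \<inter> Xg (- g) \<inter> Xg (- g + k))"
    then obtain x where x: "x \<in> V" "x \<in> Xg (- g)" "x \<in> Xg (- g + k)" and y: "y = phi g x" by blast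
    have "y \<in> phi g ` (Xg (- g) \<inter> Xg (- g + k))" using x y by blast
    then have "y \<in> Xg g \<inter> Xg (g + (- g + k))" using phi_img[of g "- g + k"] by simp
    then have 1: "y \<in> Xg g \<inter> Xg k" by (simp add: add.assoc[symmetric])
    have "phi (- (- g)) ` (Xg (- g) \<inter> V) \<subseteq> Xg (- (- g)) \<inter> V" using V unfolding invariant_set_def by blast
    then have "y \<in> V" using x y by auto
    then show "y \<in> V \<inter> Xg g \<inter> Xg k" using 1 by blast
  qed
  ultimately show ?thesis by (rule CK_mono)
qed

lemma pact_inv:
  assumes V: "invariant_set phi Xg V" and F: "F \<in> CK (V \<inter> Xg g)"
  shows "pact phi Xg (- g) F \<in> CK (V \<inter> Xg (- g))"
proof -
  have "pact phi Xg (- g) F \<in> CK (phi (- g) ` (V \<inter> Xg g))"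
    using F by (rule pact_CK) simp
  moreover have "phi (- g) ` (V \<inter> Xg g) \<subseteq> V \<inter> Xg (- g)"
    using V unfolding invariant_set_def by blast
  ultimately show ?thesis by (rule CK_mono)
qed

lemma skew_mult_apply:
  "skew_mult phi Xg a b k = (\<lambda>x. \<Sum>g\<in>fsupp a. pact phi Xg g (\<lambda>y. pact phi Xg (- g) (a g) y * b (- g + k) y) x)"
  unfolding skew_mult_def by simp

lemma mult_closed:
  assumes A: "invariant_set phi Xg A" and B: "invariant_set phi Xg B"
    and a: "a \<in> skew_ring Xg A" and b: "b \<in> skew_ring Xg B"
  shows "skew_mult phi Xg a b \<in> skew_ring Xg (A \<inter> B)"
proof -
  have fa: "finite (fsupp a)" and ag: "\<And>g. a g \<in> CK (A \<inter> Xg g)" using a unfolding skew_ring_def by auto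
  have fb: "finite (fsupp b)" and bg: "\<And>g. b g \<in> CK (B \<inter> Xg g)" using b unfolding skew_ring_def by auto
  have AB: "invariant_set phi Xg (A \<inter> B)" using A B by (rule inv_Int)
  have comp: "skew_mult phi Xg a b k \<in> CK (A \<inter> B \<inter> Xg k)" for k
  proof -
    have "pact phi Xg g (\<lambda>y. pact phi Xg (- g) (a g) y * b (- g + k) y) \<in> CK (A \<inter> B \<inter> Xg g \<inter> Xg k)" for g
    proof -
      have "(\<lambda>y. pact phi Xg (- g) (a g) y * b (- g + k) y) \<in> CK ((A \<inter> Xg (- g)) \<inter> (B \<inter> Xg (- g + k)))"
        by (rule CK_mult[OF pact_inv[OF A ag] bg])
      then have "(\<lambda>y. pact phi Xg (- g) (a g) y * b (- g + k) y) \<in> CK (A \<inter> B \<inter> Xg (- g) \<inter> Xg (- g + k))"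
        by (rule CK_mono) blast
      then show ?thesis by (rule pact_key[OF AB])
    qed
    then have "\<And>g. pact phi Xg g (\<lambda>y. pact phi Xg (- g) (a g) y * b (- g + k) y) \<in> CK (A \<inter> B \<inter> Xg k)"
      by (rule CK_mono) blast
    then show ?thesis unfolding skew_mult_apply by (rule CK_sum[OF fa])
  qed
  have "fsupp (skew_mult phi Xg a b) \<subseteq> (\<lambda>p. fst p + snd p) ` (fsupp a \<times> fsupp b)"
  proof
    fix k assume k: "k \<in> fsupp (skew_mult phi Xg a b)"
    show "k \<in> (\<lambda>p. fst p + snd p) ` (fsupp a \<times> fsupp b)"
    proof (rule ccontr)
      assume nk: "k \<notin> (\<lambda>p. fst p + snd p) ` (fsupp a \<times> fsupp b)"
      have "pact phi Xg g (\<lambda>y. pact phi Xg (- g) (a g) y * b (- g + k) y) = (\<lambda>_. 0)" if g: "g \<in> fsupp a" for g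
      proof -
        have "- g + k \<notin> fsupp b"
        proof
          assume "- g + k \<in> fsupp b"
          then have "(g, - g + k) \<in> fsupp a \<times> fsupp b" using g by blast
          then have "g + (- g + k) \<in> (\<lambda>p. fst p + snd p) ` (fsupp a \<times> fsupp b)" by force
          then show False using nk by (simp add: add.assoc[symmetric])
        qed
        then have "b (- g + k) = (\<lambda>_. 0)" unfolding fsupp_def by simp
        then show ?thesis by (simp add: pact_zero)
      qed
      then have "skew_mult phi Xg a b k = (\<lambda>_. 0)" unfolding skew_mult_apply by simp
      then show False using k unfolding fsupp_def by simp
    qed
  qed
  then have "finite (fsupp (skew_mult phi Xg a b))" using fa fb by (meson finite_SigmaI finite_imageI finite_subset)
  then show ?thesis using comp unfolding skew_ring_def by blast
qed

lemma mult_hom: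
  "skew_mult phi Xg (hom_comp g a) b k = pact phi Xg g (\<lambda>y. pact phi Xg (- g) (a g) y * b (- g + k) y)"
proof (cases "a g = (\<lambda>_. 0)")
  case True
  have "fsupp (hom_comp g a) = {}" using True unfolding fsupp_def hom_comp_def by auto
  then show ?thesis using True unfolding skew_mult_apply by (simp add: pact_zero)
next
  case False
  have "fsupp (hom_comp g a) = {g}" using False unfolding fsupp_def hom_comp_def by auto
  then show ?thesis unfolding skew_mult_apply by (simp add: hom_comp_def)
qed

lemma hom_in_ring: "f \<in> CK (V \<inter> Xg g) \<Longrightarrow> hom_comp g (\<lambda>_. f) \<in> skew_ring Xg V"
proof -
  assume f: "f \<in> CK (V \<inter> Xg g)"
  have "fsupp (hom_comp g (\<lambda>_. f)) \<subseteq> {g}" unfolding fsupp_def hom_comp_def by auto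
  then have "finite (fsupp (hom_comp g (\<lambda>_. f)))" by (rule finite_subset) simp
  moreover have "hom_comp g (\<lambda>_. f) h \<in> CK (V \<inter> Xg h)" for h
    using f CK_zero by (cases "h = g") (auto simp: hom_comp_def)
  ultimately show ?thesis unfolding skew_ring_def by blast
qed

lemma ring_graded:
  assumes V: "invariant_set phi Xg V"
  shows "graded_ideal phi Xg (skew_ring Xg V :: ('g \<Rightarrow> 'x \<Rightarrow> 'k::field) set)"
proof -
  have sub: "(skew_ring Xg V :: ('g \<Rightarrow> 'x \<Rightarrow> 'k) set) \<subseteq> skew_ring Xg UNIV"
  proof
    fix a :: "'g \<Rightarrow> 'x \<Rightarrow> 'k" assume "a \<in> skew_ring Xg V"
    then have "finite (fsupp a)" "\<And>g. a g \<in> CK (V \<inter> Xg g)" unfolding skew_ring_def by auto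
    moreover have "\<And>g. a g \<in> CK (V \<inter> Xg g) \<Longrightarrow> a g \<in> CK (UNIV \<inter> Xg g)" by (erule CK_mono) blast
    ultimately show "a \<in> skew_ring Xg UNIV" unfolding skew_ring_def by blast
  qed
  have zero: "(\<lambda>g x. 0 :: 'k) \<in> skew_ring Xg V"
    unfolding skew_ring_def fsupp_def using CK_zero by auto
  have add: "skew_add a b \<in> skew_ring Xg V" if a: "a \<in> skew_ring Xg V" and b: "b \<in> skew_ring Xg V" for a b :: "'g \<Rightarrow> 'x \<Rightarrow> 'k"
  proof -
    have "fsupp (skew_add a b) \<subseteq> fsupp a \<union> fsupp b"
    proof
      fix g assume g: "g \<in> fsupp (skew_add a b)"
      show "g \<in> fsupp a \<union> fsupp b"
      proof (rule ccontr)
        assume "g \<notin> fsupp a \<union> fsupp b"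
        then have "a g = (\<lambda>_. 0)" "b g = (\<lambda>_. 0)" unfolding fsupp_def by auto
        then have "skew_add a b g = (\<lambda>_. 0)" unfolding skew_add_def by simp
        then show False using g unfolding fsupp_def by simp
      qed
    qed
    moreover have "finite (fsupp a)" "finite (fsupp b)" using a b unfolding skew_ring_def by auto
    ultimately have "finite (fsupp (skew_add a b))" by (meson finite_Un finite_subset)
    moreover have "skew_add a b g \<in> CK (V \<inter> Xg g)" for g
    proof -
      have "a g \<in> CK (V \<inter> Xg g)" "b g \<in> CK (V \<inter> Xg g)" using a b unfolding skew_ring_def by auto
      then have "(\<lambda>x. a g x + b g x) \<in> CK (V \<inter> Xg g)" by (rule CK_add)
      then show ?thesis unfolding skew_add_def by simp
    qed
    ultimately show ?thesis unfolding skew_ring_def by blast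
  qed
  have neg: "skew_neg a \<in> skew_ring Xg V" if a: "a \<in> skew_ring Xg V" for a :: "'g \<Rightarrow> 'x \<Rightarrow> 'k"
  proof -
    have "skew_neg a g = (\<lambda>_. 0) \<longleftrightarrow> a g = (\<lambda>_. 0)" for g
      unfolding skew_neg_def fun_eq_iff by simp
    then have "fsupp (skew_neg a) = fsupp a" unfolding fsupp_def by simp
    then have "finite (fsupp (skew_neg a))" using a unfolding skew_ring_def by simp
    moreover have "skew_neg a g \<in> CK (V \<inter> Xg g)" for g
    proof -
      have "a g \<in> CK (V \<inter> Xg g)" using a unfolding skew_ring_def by auto
      then have "(\<lambda>x. - a g x) \<in> CK (V \<inter> Xg g)" by (rule CK_neg)
      then show ?thesis unfolding skew_neg_def by simp
    qed
    ultimately show ?thesis unfolding skew_ring_def by blast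
  qed
  have mult1: "skew_mult phi Xg r a \<in> skew_ring Xg V"
    if a: "a \<in> skew_ring Xg V" and r: "r \<in> skew_ring Xg UNIV" for a r :: "'g \<Rightarrow> 'x \<Rightarrow> 'k"
    using mult_closed[OF inv_UNIV V r a] by simp
  have mult2: "skew_mult phi Xg a r \<in> skew_ring Xg V"
    if a: "a \<in> skew_ring Xg V" and r: "r \<in> skew_ring Xg UNIV" for a r :: "'g \<Rightarrow> 'x \<Rightarrow> 'k"
    using mult_closed[OF V inv_UNIV a r] by simp
  have hom: "hom_comp g a \<in> skew_ring Xg V" if a: "a \<in> skew_ring Xg V" for a :: "'g \<Rightarrow> 'x \<Rightarrow> 'k" and g
  proof -
    have "hom_comp g a = hom_comp g (\<lambda>_. a g)" unfolding hom_comp_def by auto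
    moreover have "a g \<in> CK (V \<inter> Xg g)" using a unfolding skew_ring_def by blast
    ultimately show ?thesis using hom_in_ring[of "a g" V g] by (simp only:)
  qed
  show ?thesis unfolding graded_ideal_def skew_ideal_def
    by (intro conjI ballI allI sub zero add neg mult1 mult2 hom)
qed

lemma cob: "has_compact_open_basis TYPE('x) \<Longrightarrow> open U \<Longrightarrow> x \<in> U \<Longrightarrow>
    \<exists>W. open W \<and> compact W \<and> x \<in> W \<and> W \<subseteq> (U :: 'x set)"
  unfolding has_compact_open_basis_def by blast

context
  fixes I :: "('g \<Rightarrow> 'x \<Rightarrow> 'k::field) set"
  assumes GI: "graded_ideal phi Xg I" and CB: "has_compact_open_basis TYPE('x)"
begin

lemma I_ring: "a \<in> I \<Longrightarrow> a \<in> skew_ring Xg UNIV"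
  using GI unfolding graded_ideal_def skew_ideal_def by blast

lemma I_zero: "(\<lambda>g x. 0) \<in> I"
  using GI unfolding graded_ideal_def skew_ideal_def by blast

lemma I_add: "a \<in> I \<Longrightarrow> b \<in> I \<Longrightarrow> skew_add a b \<in> I"
  using GI unfolding graded_ideal_def skew_ideal_def by blast

lemma I_neg: "a \<in> I \<Longrightarrow> skew_neg a \<in> I"
  using GI unfolding graded_ideal_def skew_ideal_def by blast

lemma I_lmult: "a \<in> I \<Longrightarrow> r \<in> skew_ring Xg UNIV \<Longrightarrow> skew_mult phi Xg r a \<in> I"
  using GI unfolding graded_ideal_def skew_ideal_def by blast

lemma I_rmult: "a \<in> I \<Longrightarrow> r \<in> skew_ring Xg UNIV \<Longrightarrow> skew_mult phi Xg a r \<in> I"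
  using GI unfolding graded_ideal_def skew_ideal_def by blast

lemma I_hom: "a \<in> I \<Longrightarrow> hom_comp g a \<in> I"
  using GI unfolding graded_ideal_def by blast

lemma I_CK: "a \<in> I \<Longrightarrow> a g \<in> CK (Xg g)"
proof -
  assume "a \<in> I"
  then have "a g \<in> CK (UNIV \<inter> Xg g)" using I_ring unfolding skew_ring_def by blast
  then show ?thesis by (rule CK_mono) blast
qed

lemma I_lcst: "a \<in> I \<Longrightarrow> lcst (a g)"
  using I_CK unfolding CK_iff by blast

lemma Vof_open: "open (Vof I)"
proof (rule Topological_Spaces.openI)
  fix x assume "x \<in> Vof I"
  then obtain a where a: "a \<in> I" "a 0 x \<noteq> 0" unfolding Vof_def by blast
  have "open {y. a 0 y \<noteq> 0}" using I_lcst[OF a(1)] by (rule lcst_open_neq)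
  moreover have "{y. a 0 y \<noteq> 0} \<subseteq> Vof I" using a(1) unfolding Vof_def by blast
  ultimately show "\<exists>T. open T \<and> x \<in> T \<and> T \<subseteq> Vof I" using a(2) by blast
qed

lemma ind_val: "x \<in> W \<Longrightarrow> (ind W :: 'x \<Rightarrow> 'k) x = 1"
  unfolding ind_def by simp

lemma I_sub_V: "a \<in> I \<Longrightarrow> a \<in> skew_ring Xg (Vof I)"
proof -
  assume aI: "a \<in> I"
  have fin: "finite (fsupp a)" using I_ring[OF aI] unfolding skew_ring_def by blast
  have "a g \<in> CK (Vof I \<inter> Xg g)" for g
  proof -
    have ag: "a g \<in> CK (Xg g)" using aI by (rule I_CK)
    have van: "a g x = 0" if nx: "x \<notin> Vof I \<inter> Xg g" for x
    proof (rule ccontr)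
      assume ne: "a g x \<noteq> 0"
      have xX: "x \<in> Xg g" using CK_supp_sub[OF ag] ne by blast
      define z where "z = phi (- g) x"
      have zX: "z \<in> Xg (- g)" unfolding z_def using xX by (rule phi_maps')
      obtain W where W: "open W" "compact W" "z \<in> W" "W \<subseteq> Xg (- g)"
        using cob[OF CB Xg_open zX] by blast
      define e where "e = (ind W :: 'x \<Rightarrow> 'k)"
      have eCK: "e \<in> CK (UNIV \<inter> Xg (- g))" unfolding e_def using W by (intro ind_CK) auto
      define b where "b = hom_comp (- g) (\<lambda>_. e)"
      have bR: "b \<in> skew_ring Xg UNIV" unfolding b_def using eCK by (rule hom_in_ring)
      define p where "p = skew_mult phi Xg (hom_comp g a) b"
      have pI: "p \<in> I" unfolding p_def using I_hom[OF aI] bR by (rule I_rmult)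
      have b0: "b (- g + 0) = e" unfolding b_def hom_comp_def by simp
      have "p 0 = pact phi Xg g (\<lambda>y. pact phi Xg (- g) (a g) y * b (- g + 0) y)"
        unfolding p_def by (rule mult_hom)
      then have "p 0 x = pact phi Xg (- g) (a g) z * e z"
        using xX unfolding b0 pact_def z_def by simp
      also have "\<dots> = a g (phi g z)" using zX W(3) unfolding pact_def e_def ind_def by simp
      also have "\<dots> = a g x" unfolding z_def using phi_inv1[OF xX] by simp
      finally have "p 0 x \<noteq> 0" using ne by simp
      then have "x \<in> Vof I" using pI unfolding Vof_def by blast
      then show False using nx xX by blast
    qed
    show ?thesis using ag van unfolding CK_iff by blast
  qed
  then show ?thesis using fin unfolding skew_ring_def by blast
qed

lemma J_mult:
  assumes aI: "a \<in> I" and h: "h \<in> CK UNIV"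
  shows "hom_comp (0::'g) (\<lambda>_. \<lambda>y. h y * a 0 y) \<in> I"
proof -
  have "h \<in> CK (UNIV \<inter> Xg 0)" using h by (simp add: Xg0)
  then have rR: "hom_comp (0::'g) (\<lambda>_. h) \<in> skew_ring Xg UNIV" by (rule hom_in_ring)
  define p where "p = skew_mult phi Xg (hom_comp (0::'g) (\<lambda>_. h)) a"
  have pI: "p \<in> I" unfolding p_def using aI rR by (rule I_lmult)
  have "p 0 = pact phi Xg 0 (\<lambda>y. pact phi Xg (- 0) h y * a (- 0 + 0) y)"
    unfolding p_def by (rule mult_hom)
  then have p0: "p 0 = (\<lambda>y. h y * a 0 y)" by (simp add: pact_0)
  have "hom_comp 0 p = hom_comp (0::'g) (\<lambda>_. \<lambda>y. h y * a 0 y)"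
    unfolding hom_comp_def p0[symmetric] by simp
  moreover have "hom_comp 0 p \<in> I" using pI by (rule I_hom)
  ultimately show ?thesis by simp
qed

lemma J_of: "a \<in> I \<Longrightarrow> hom_comp (0::'g) (\<lambda>_. a 0) \<in> I"
proof -
  assume "a \<in> I"
  then have "hom_comp 0 a \<in> I" by (rule I_hom)
  moreover have "hom_comp 0 a = hom_comp (0::'g) (\<lambda>_. a 0)" unfolding hom_comp_def by (rule ext) simp
  ultimately show ?thesis by simp
qed

lemma J_add: "hom_comp (0::'g) (\<lambda>_. f) \<in> I \<Longrightarrow> hom_comp (0::'g) (\<lambda>_. h) \<in> I \<Longrightarrow> hom_comp (0::'g) (\<lambda>_. \<lambda>y. f y + h y) \<in> I"
proof -
  assume "hom_comp (0::'g) (\<lambda>_. f) \<in> I" "hom_comp (0::'g) (\<lambda>_. h) \<in> I"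
  then have "skew_add (hom_comp (0::'g) (\<lambda>_. f)) (hom_comp (0::'g) (\<lambda>_. h)) \<in> I" by (rule I_add)
  moreover have "skew_add (hom_comp (0::'g) (\<lambda>_. f)) (hom_comp (0::'g) (\<lambda>_. h)) = hom_comp (0::'g) (\<lambda>_. \<lambda>y. f y + h y)"
    unfolding skew_add_def hom_comp_def by (intro ext) simp
  ultimately show ?thesis by metis
qed

lemma J_neg: "hom_comp (0::'g) (\<lambda>_. f) \<in> I \<Longrightarrow> hom_comp (0::'g) (\<lambda>_. \<lambda>y. - f y) \<in> I"
proof -
  assume "hom_comp (0::'g) (\<lambda>_. f) \<in> I"
  then have "skew_neg (hom_comp (0::'g) (\<lambda>_. f)) \<in> I" by (rule I_neg)
  moreover have "skew_neg (hom_comp (0::'g) (\<lambda>_. f)) = hom_comp (0::'g) (\<lambda>_. \<lambda>y. - f y)"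
    unfolding skew_neg_def hom_comp_def by (intro ext) simp
  ultimately show ?thesis by (simp only:)
qed

lemma J_zero: "hom_comp (0::'g) (\<lambda>_. \<lambda>_. 0) \<in> I"
proof -
  have "hom_comp (0::'g) (\<lambda>_. \<lambda>_. 0) = (\<lambda>(g::'g) (x::'x). 0 :: 'k)" unfolding hom_comp_def by (intro ext) simp
  then show ?thesis using I_zero by metis
qed

lemma J_union:
  assumes "finite D" "\<forall>W\<in>D. open W \<and> compact W \<and> hom_comp (0::'g) (\<lambda>_. ind W :: 'x \<Rightarrow> 'k) \<in> I"
  shows "hom_comp (0::'g) (\<lambda>_. ind (\<Union>D) :: 'x \<Rightarrow> 'k) \<in> I"
  using assms
proof (induction D rule: finite_induct)
  case empty
  have "(ind {} :: 'x \<Rightarrow> 'k) = (\<lambda>_. 0)" unfolding ind_def by simp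
  then show ?case using J_zero by simp
next
  case (insert W D)
  define U where "U = \<Union>D"
  have IU: "hom_comp (0::'g) (\<lambda>_. ind U :: 'x \<Rightarrow> 'k) \<in> I" unfolding U_def using insert by blast
  have IW: "hom_comp (0::'g) (\<lambda>_. ind W :: 'x \<Rightarrow> 'k) \<in> I" using insert by blast
  have WCK: "(ind W :: 'x \<Rightarrow> 'k) \<in> CK UNIV" using insert by (intro ind_CK) auto
  have "hom_comp (0::'g) (\<lambda>_. \<lambda>y. ind W y * hom_comp (0::'g) (\<lambda>_. ind U :: 'x \<Rightarrow> 'k) 0 y) \<in> I"
    using IU WCK by (rule J_mult)
  then have Iprod: "hom_comp (0::'g) (\<lambda>_. \<lambda>y. ind W y * (ind U :: 'x \<Rightarrow> 'k) y) \<in> I"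
    unfolding hom_comp_def[of 0 "\<lambda>_. ind U"] by simp
  have "hom_comp (0::'g) (\<lambda>_. \<lambda>y. (ind W y + ind U y) + - (ind W y * (ind U :: 'x \<Rightarrow> 'k) y)) \<in> I"
    by (intro J_add J_neg IW IU Iprod)
  moreover have "(\<lambda>y. (ind W y + ind U y) + - (ind W y * (ind U :: 'x \<Rightarrow> 'k) y)) = ind (\<Union>(insert W D))"
    unfolding U_def ind_def by (intro ext) auto
  ultimately show ?case by simp
qed

lemma J_ind:
  assumes U: "compact U" "open U" "U \<subseteq> Vof I"
  shows "hom_comp (0::'g) (\<lambda>_. ind U :: 'x \<Rightarrow> 'k) \<in> I"
proof -
  define C where "C = {W. open W \<and> compact W \<and> W \<subseteq> U \<and> hom_comp (0::'g) (\<lambda>_. ind W :: 'x \<Rightarrow> 'k) \<in> I}"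
  have cov: "U \<subseteq> \<Union>C"
  proof
    fix x assume xU: "x \<in> U"
    then obtain a where aI: "a \<in> I" and ax: "a 0 x \<noteq> 0" using U(3) unfolding Vof_def by blast
    define c where "c = a 0 x"
    define W where "W = U \<inter> {y. a 0 y = c}"
    have lc: "lcst (a 0)" using aI by (rule I_lcst)
    have oW: "open W" unfolding W_def using U(2) lcst_open_eq[OF lc] by blast
    have "closed {y. a 0 y = c}" using lc by (rule lcst_closed_eq)
    then have cW: "compact W" unfolding W_def using U(1) by (intro compact_Int_closed)
    have hCK: "(\<lambda>y. (ind W :: 'x \<Rightarrow> 'k) y * inverse c) \<in> CK UNIV"
      using oW cW by (intro CK_scale ind_CK) auto
    have "hom_comp (0::'g) (\<lambda>_. \<lambda>y. (ind W y * inverse c) * a 0 y) \<in> I"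
      using aI hCK by (rule J_mult)
    moreover have "(\<lambda>y. (ind W y * inverse c) * a 0 y) = ind W"
    proof
      fix y show "ind W y * inverse c * a 0 y = ind W y"
      proof (cases "y \<in> W")
        case True
        then have "a 0 y = c" unfolding W_def by simp
        then show ?thesis using ax unfolding c_def ind_def by simp
      qed (simp add: ind_def)
    qed
    ultimately have "W \<in> C" unfolding C_def W_def using oW cW unfolding W_def by auto
    moreover have "x \<in> W" unfolding W_def c_def using xU by simp
    ultimately show "x \<in> \<Union>C" by blast
  qed
  obtain D where D: "D \<subseteq> C" "finite D" "U \<subseteq> \<Union>D"
    using compactE[OF U(1) cov] unfolding C_def by blast
  have "\<Union>D = U" using D unfolding C_def by blast
  moreover have "hom_comp (0::'g) (\<lambda>_. ind (\<Union>D) :: 'x \<Rightarrow> 'k) \<in> I"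
    using D(2) by (rule J_union) (use D(1) in \<open>auto simp: C_def\<close>)
  ultimately show ?thesis by simp
qed

lemma J_CK:
  assumes f: "f \<in> CK (Vof I)"
  shows "hom_comp (0::'g) (\<lambda>_. f) \<in> I"
proof -
  define T where "T = {x. f x \<noteq> 0}"
  have cT: "compact T" unfolding T_def using f by (rule CK_supp_compact)
  have oT: "open T" unfolding T_def using f by (rule CK_supp_open)
  have TV: "T \<subseteq> Vof I" unfolding T_def using f by (rule CK_supp_sub)
  have IT: "hom_comp (0::'g) (\<lambda>_. ind T :: 'x \<Rightarrow> 'k) \<in> I" using cT oT TV by (rule J_ind)
  have fU: "f \<in> CK UNIV" using f by (rule CK_mono) simp
  have "hom_comp (0::'g) (\<lambda>_. \<lambda>y. f y * hom_comp (0::'g) (\<lambda>_. ind T :: 'x \<Rightarrow> 'k) 0 y) \<in> I"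
    using IT fU by (rule J_mult)
  moreover have "(\<lambda>y. f y * hom_comp (0::'g) (\<lambda>_. ind T :: 'x \<Rightarrow> 'k) 0 y) = f"
    unfolding hom_comp_def ind_def T_def by (intro ext) simp
  ultimately show ?thesis by simp
qed

lemma J_delta:
  assumes f: "f \<in> CK (Vof I \<inter> Xg g)"
  shows "hom_comp g (\<lambda>_. f) \<in> I"
proof -
  define T where "T = {x. f x \<noteq> 0}"
  have cT: "compact T" unfolding T_def using f by (rule CK_supp_compact)
  have oT: "open T" unfolding T_def using f by (rule CK_supp_open)
  have TV: "T \<subseteq> Vof I \<inter> Xg g" unfolding T_def using f by (rule CK_supp_sub)
  have "(ind T :: 'x \<Rightarrow> 'k) \<in> CK (UNIV \<inter> Xg g)" using cT oT TV by (intro ind_CK) auto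
  then have bR: "hom_comp g (\<lambda>_. ind T :: 'x \<Rightarrow> 'k) \<in> skew_ring Xg UNIV" by (rule hom_in_ring)
  have cI: "hom_comp (0::'g) (\<lambda>_. f) \<in> I" using f by (intro J_CK) (erule CK_mono, blast)
  define p where "p = skew_mult phi Xg (hom_comp (0::'g) (\<lambda>_. f)) (hom_comp g (\<lambda>_. ind T :: 'x \<Rightarrow> 'k))"
  have pI: "p \<in> I" unfolding p_def using cI bR by (rule I_rmult)
  have "p = hom_comp g (\<lambda>_. f)"
  proof
    fix k
    have "p k = pact phi Xg 0 (\<lambda>y. pact phi Xg (- 0) f y * hom_comp g (\<lambda>_. ind T :: 'x \<Rightarrow> 'k) (- 0 + k) y)"
      unfolding p_def by (rule mult_hom)
    also have "\<dots> = (\<lambda>y. f y * hom_comp g (\<lambda>_. ind T :: 'x \<Rightarrow> 'k) k y)" by (simp add: pact_0)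
    also have "\<dots> = hom_comp g (\<lambda>_. f) k"
      unfolding hom_comp_def ind_def T_def by (intro ext) simp
    finally show "p k = hom_comp g (\<lambda>_. f) k" .
  qed
  then show ?thesis using pI by simp
qed

lemma ring_sub_I_aux:
  "finite S \<Longrightarrow> \<forall>a. a \<in> skew_ring Xg (Vof I) \<longrightarrow> fsupp a \<subseteq> S \<longrightarrow> a \<in> I"
proof (induction S rule: finite_induct)
  case empty
  show ?case
  proof (intro allI impI)
    fix a :: "'g \<Rightarrow> 'x \<Rightarrow> 'k" assume "fsupp a \<subseteq> {}"
    then have "\<And>g. a g = (\<lambda>_. 0)" unfolding fsupp_def by blast
    then have "a = (\<lambda>g x. 0)" by (intro ext) simp
    then show "a \<in> I" using I_zero by simp
  qed
next
  case (insert g S)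
  show ?case
  proof (intro allI impI)
    fix a :: "'g \<Rightarrow> 'x \<Rightarrow> 'k" assume aR: "a \<in> skew_ring Xg (Vof I)" and aS: "fsupp a \<subseteq> insert g S"
    define a' where "a' = (\<lambda>h. if h = g then (\<lambda>_. 0) else a h)"
    have fa: "finite (fsupp a)" and ac: "\<And>h. a h \<in> CK (Vof I \<inter> Xg h)" using aR unfolding skew_ring_def by auto
    have sub': "fsupp a' \<subseteq> fsupp a" unfolding fsupp_def a'_def by auto
    have "a' \<in> skew_ring Xg (Vof I)"
      unfolding skew_ring_def using finite_subset[OF sub' fa] ac CK_zero by (auto simp: a'_def)
    moreover have "fsupp a' \<subseteq> S" using aS unfolding fsupp_def a'_def by auto
    ultimately have a'I: "a' \<in> I" using insert.IH by blast
    have hI: "hom_comp g (\<lambda>_. a g) \<in> I" using ac by (rule J_delta)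
    have "skew_add (hom_comp g (\<lambda>_. a g)) a' \<in> I" using hI a'I by (rule I_add)
    moreover have "skew_add (hom_comp g (\<lambda>_. a g)) a' = a"
      unfolding skew_add_def hom_comp_def a'_def by (intro ext) simp
    ultimately show "a \<in> I" by simp
  qed
qed

lemma ring_sub_I: "a \<in> skew_ring Xg (Vof I) \<Longrightarrow> a \<in> I"
  using ring_sub_I_aux[of "fsupp a"] unfolding skew_ring_def by blast

lemma I_eq: "I = skew_ring Xg (Vof I)"
  using I_sub_V ring_sub_I by blast

lemma Vof_inv: "invariant_set phi Xg (Vof I)"
  unfolding invariant_set_def
proof (intro allI subsetI)
  fix g z assume "z \<in> phi (- g) ` (Xg g \<inter> Vof I)"
  then obtain x where xX: "x \<in> Xg g" and xV: "x \<in> Vof I" and z: "z = phi (- g) x" by blast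
  have zX: "z \<in> Xg (- g)" unfolding z using xX by (rule phi_maps')
  have "open (Xg g \<inter> Vof I)" using Xg_open Vof_open by blast
  then obtain U where U: "open U" "compact U" "x \<in> U" "U \<subseteq> Xg g \<inter> Vof I"
    using cob[OF CB] xX xV by blast
  have "(ind U :: 'x \<Rightarrow> 'k) \<in> CK (Vof I \<inter> Xg g)" using U by (intro ind_CK) auto
  then have cI: "hom_comp g (\<lambda>_. ind U :: 'x \<Rightarrow> 'k) \<in> I" by (rule J_delta)
  obtain W where W: "open W" "compact W" "z \<in> W" "W \<subseteq> Xg (- g)"
    using cob[OF CB Xg_open zX] by blast
  have "(ind W :: 'x \<Rightarrow> 'k) \<in> CK (UNIV \<inter> Xg (- g))" using W by (intro ind_CK) auto
  then have dR: "hom_comp (- g) (\<lambda>_. ind W :: 'x \<Rightarrow> 'k) \<in> skew_ring Xg UNIV" by (rule hom_in_ring)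
  define p where "p = skew_mult phi Xg (hom_comp (- g) (\<lambda>_. ind W :: 'x \<Rightarrow> 'k)) (hom_comp g (\<lambda>_. ind U :: 'x \<Rightarrow> 'k))"
  have pI: "p \<in> I" unfolding p_def using cI dR by (rule I_lmult)
  define F where "F = (\<lambda>y. pact phi Xg (- (- g)) (ind W :: 'x \<Rightarrow> 'k) y * hom_comp g (\<lambda>_. ind U :: 'x \<Rightarrow> 'k) (- (- g) + 0) y)"
  have "p 0 = pact phi Xg (- g) F"
    unfolding p_def F_def by (rule mult_hom)
  then have "p 0 z = F (phi (- (- g)) z)" using zX unfolding pact_def by simp
  also have "\<dots> = F x" using phi_inv1[OF xX] unfolding z by simp
  also have "\<dots> = pact phi Xg g (ind W :: 'x \<Rightarrow> 'k) x * (ind U :: 'x \<Rightarrow> 'k) x"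
    unfolding F_def hom_comp_def by simp
  also have "\<dots> = (ind W :: 'x \<Rightarrow> 'k) z * (ind U :: 'x \<Rightarrow> 'k) x"
    using xX unfolding pact_def z by simp
  also have "\<dots> = 1" using W(3) U(3) unfolding ind_def by simp
  finally have "p 0 z = 1" .
  then have "p 0 z \<noteq> 0" by simp
  then have "z \<in> Vof I" using pI unfolding Vof_def by blast
  then show "z \<in> Xg (- g) \<inter> Vof I" using zX by blast
qed

end

end

theorem mainTheorem10:
  fixes phi :: "'g::group_add \<Rightarrow> 'x::t2_space \<Rightarrow> 'x"
    and Xg :: "'g \<Rightarrow> 'x set"
  assumes "locally_compact_Hausdorff_space TYPE('x)"
    and "has_compact_open_basis TYPE('x)"
    and "partial_action phi Xg"
  shows "bij_betw (\<lambda>V. skew_ring Xg V :: ('g \<Rightarrow> 'x \<Rightarrow> 'k::field) set)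
           {V. open V \<and> invariant_set phi Xg V}
           {I. graded_ideal phi Xg I}"
proof -
  note PA = assms(3) and CB = assms(2)
  have sub: "A \<subseteq> B" if oA: "open A" and eq: "skew_ring Xg A = (skew_ring Xg B :: ('g \<Rightarrow> 'x \<Rightarrow> 'k) set)" for A B
  proof
    fix x assume xA: "x \<in> A"
    obtain U where U: "open U" "compact U" "x \<in> U" "U \<subseteq> A" using cob[OF PA CB oA xA] by blast
    have "(ind U :: 'x \<Rightarrow> 'k) \<in> CK (A \<inter> Xg 0)" using U Xg0[OF PA] by (intro ind_CK) auto
    then have "hom_comp (0::'g) (\<lambda>_. ind U :: 'x \<Rightarrow> 'k) \<in> skew_ring Xg A" by (rule hom_in_ring[OF PA])
    then have "hom_comp (0::'g) (\<lambda>_. ind U :: 'x \<Rightarrow> 'k) \<in> skew_ring Xg B" using eq by simp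
    then have "hom_comp (0::'g) (\<lambda>_. ind U :: 'x \<Rightarrow> 'k) 0 \<in> CK (B \<inter> Xg 0)" unfolding skew_ring_def by blast
    then have "(ind U :: 'x \<Rightarrow> 'k) \<in> CK (B \<inter> Xg 0)" unfolding hom_comp_def by simp
    then have "{y. (ind U :: 'x \<Rightarrow> 'k) y \<noteq> 0} \<subseteq> B \<inter> Xg 0" by (rule CK_supp_sub)
    moreover have "(ind U :: 'x \<Rightarrow> 'k) x \<noteq> 0" using U(3) unfolding ind_def by simp
    ultimately show "x \<in> B" by blast
  qed
  have inj: "inj_on (\<lambda>V. skew_ring Xg V :: ('g \<Rightarrow> 'x \<Rightarrow> 'k) set) {V. open V \<and> invariant_set phi Xg V}"
  proof (rule inj_onI)
    fix V W assume V: "V \<in> {V. open V \<and> invariant_set phi Xg V}" and W: "W \<in> {V. open V \<and> invariant_set phi Xg V}"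
      and eq: "(skew_ring Xg V :: ('g \<Rightarrow> 'x \<Rightarrow> 'k) set) = skew_ring Xg W"
    have "V \<subseteq> W" using V eq by (intro sub) auto
    moreover have "W \<subseteq> V" using W eq[symmetric] by (intro sub) auto
    ultimately show "V = W" by blast
  qed
  have img: "(\<lambda>V. skew_ring Xg V :: ('g \<Rightarrow> 'x \<Rightarrow> 'k) set) ` {V. open V \<and> invariant_set phi Xg V}
      = {I. graded_ideal phi Xg I}"
  proof
    show "(\<lambda>V. skew_ring Xg V :: ('g \<Rightarrow> 'x \<Rightarrow> 'k) set) ` {V. open V \<and> invariant_set phi Xg V}
      \<subseteq> {I. graded_ideal phi Xg I}"
      using ring_graded[OF PA] by blast
  next
    show "{I. graded_ideal phi Xg I} \<subseteq> (\<lambda>V. skew_ring Xg V :: ('g \<Rightarrow> 'x \<Rightarrow> 'k) set) ` {V. open V \<and> invariant_set phi Xg V}"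
    proof
      fix I :: "('g \<Rightarrow> 'x \<Rightarrow> 'k) set" assume "I \<in> {I. graded_ideal phi Xg I}"
      then have GI: "graded_ideal phi Xg I" by simp
      have "I = skew_ring Xg (Vof I)" by (rule I_eq[OF PA GI CB])
      moreover have "Vof I \<in> {V. open V \<and> invariant_set phi Xg V}"
        using Vof_open[OF PA GI CB] Vof_inv[OF PA GI CB] by simp
      ultimately show "I \<in> (\<lambda>V. skew_ring Xg V :: ('g \<Rightarrow> 'x \<Rightarrow> 'k) set) ` {V. open V \<and> invariant_set phi Xg V}"
        by (rule image_eqI)
    qed
  qed
  show ?thesis unfolding bij_betw_def using inj img by blast
qed

end
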